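(* Let $X$ be a nonempty set, let $w$ be a metric modular on $X$, let $x_0\in X$ and let $X_w^*=\{x\in X:\exists\,\lambda>0,\ w_\lambda(x,x_0)<\infty\}$. Let $T\colon X_w^*\to X_w^*$ be a map and let $k\in(0,1)$, $\lambda_0>0$ be such that $w_{k\lambda}(Tx,Ty)\le k\,w_\lambda(x,y)$ for all $0<\lambda\le\lambda_0$ and all $x,y\in X_w^*$. Let $0<\lambda<\lambda_0$ and let $\lambda_1,\lambda_2>0$ with $\lambda_1+\lambda_2=(1-k)\lambda$. Then $$w_\lambda(x,y)\le \frac{w_{\lambda_1}(x,Tx)+w_{\lambda_2}(y,Ty)}{1-k}$$ for every $x,y\in X_w^*$ such that $w_\lambda(x,y)<\infty$.
   Context: A metric modular on a nonempty set $X$ is a function $w\colon(0,\infty)\times X\times X\to[0,\infty]$, written $(\lambda,x,y)\mapsto w_\lambda(x,y)$, such that for all $x,y,z\in X$: (1) $w_\lambda(x,y)=0$ for all $\lambda>0$ if and only if $x=y$; (2) $w_\lambda(x,y)=w_\lambda(y,x)$ for all $\lambda>0$; (3) $w_{\lambda+\mu}(x,y)\le w_\lambda(x,z)+w_\mu(y,z)$ for all $\lambda,\mu>0$. Arithmetic is in $[0,\infty]$. *)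

theory Defs
  imports "HOL-Analysis.Analysis" "HOL-Library.Extended_Nonnegative_Real"
begin

text \<open>A metric modular on a nonempty set X: w lam x y stands for w_lam(x,y) in [0,infinity].
  Only values for lam > 0 and x, y in X are relevant.\<close>
definition metric_modular :: "'a set \<Rightarrow> (real \<Rightarrow> 'a \<Rightarrow> 'a \<Rightarrow> ennreal) \<Rightarrow> bool" where
  "metric_modular X w \<longleftrightarrow>
     (\<forall>x\<in>X. \<forall>y\<in>X. (\<forall>lam>0. w lam x y = 0) \<longleftrightarrow> x = y) \<and>
     (\<forall>x\<in>X. \<forall>y\<in>X. \<forall>lam>0. w lam x y = w lam y x) \<and>
     (\<forall>x\<in>X. \<forall>y\<in>X. \<forall>z\<in>X. \<forall>lam>0. \<forall>mu>0. w (lam + mu) x y \<le> w lam x z + w mu y z)"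

definition modular_set :: "'a set \<Rightarrow> (real \<Rightarrow> 'a \<Rightarrow> 'a \<Rightarrow> ennreal) \<Rightarrow> 'a \<Rightarrow> 'a set" where
  "modular_set X w x0 = {x\<in>X. \<exists>lam>0. w lam x x0 < \<infinity>}"

end

theory Submission
  imports Defs
begin

lemma ennreal_key:
  fixes W S :: ennreal and k :: real
  assumes "0 < k" "k < 1" "W < \<infinity>" "W \<le> S + ennreal k * W"
  shows "W \<le> S / ennreal (1 - k)"
proof (cases "S = \<infinity>")
  case True
  then have "S / ennreal (1 - k) = top" using assms(2) by (simp add: ennreal_top_divide)
  then show ?thesis by simp
next
  case False
  obtain r where r: "W = ennreal r" "0 \<le> r" using assms(3) by (cases W) auto
  obtain s where s: "S = ennreal s" "0 \<le> s" using False by (cases S) auto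
  have "ennreal r \<le> ennreal (s + k * r)"
  proof -
    have m: "ennreal k * ennreal r = ennreal (k * r)"
      using assms(1) r(2) by (rule ennreal_mult[symmetric, OF less_imp_le])
    have p: "ennreal s + ennreal (k * r) = ennreal (s + k * r)"
      using s(2) r(2) assms(1) by (intro ennreal_plus[symmetric]) auto
    show ?thesis using assms(4) unfolding r(1) s(1) m p .
  qed
  moreover have nn: "0 \<le> s + k * r" using s r assms(1) by simp
  ultimately have "r \<le> s + k * r" using ennreal_le_iff[OF nn, of r] by blast
  hence "r \<le> s / (1 - k)" using assms(2) by (simp add: field_simps)
  hence "ennreal r \<le> ennreal (s / (1 - k))" by (rule ennreal_leI)
  also have "\<dots> = ennreal s / ennreal (1 - k)" using assms(2) s by (simp add: divide_ennreal)
  finally show ?thesis using r s by simp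
qed

theorem proposition4p5:
  fixes X :: "'a set" and w :: "real \<Rightarrow> 'a \<Rightarrow> 'a \<Rightarrow> ennreal"
    and x0 :: 'a and T :: "'a \<Rightarrow> 'a" and k lam0 lam lam1 lam2 :: real
  assumes "X \<noteq> {}"
    and "metric_modular X w"
    and "x0 \<in> X"
    and "T ` modular_set X w x0 \<subseteq> modular_set X w x0"
    and "0 < k" and "k < 1" and "0 < lam0"
    and "\<And>l x y. 0 < l \<Longrightarrow> l \<le> lam0 \<Longrightarrow> x \<in> modular_set X w x0 \<Longrightarrow>
            y \<in> modular_set X w x0 \<Longrightarrow> w (k * l) (T x) (T y) \<le> ennreal k * w l x y"
    and "0 < lam" and "lam < lam0"
    and "0 < lam1" and "0 < lam2" and "lam1 + lam2 = (1 - k) * lam"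
  shows "\<forall>x\<in>modular_set X w x0. \<forall>y\<in>modular_set X w x0. w lam x y < \<infinity> \<longrightarrow>
           w lam x y \<le> (w lam1 x (T x) + w lam2 y (T y)) / ennreal (1 - k)"
proof (intro ballI impI)
  fix x y assume x: "x \<in> modular_set X w x0" and y: "y \<in> modular_set X w x0"
    and fin: "w lam x y < \<infinity>"
  have sub: "modular_set X w x0 \<subseteq> X" unfolding modular_set_def by auto
  have Tx: "T x \<in> modular_set X w x0" and Ty: "T y \<in> modular_set X w x0" using x y assms(4) by auto
  have tri: "\<And>a b p q r. p \<in> X \<Longrightarrow> q \<in> X \<Longrightarrow> r \<in> X \<Longrightarrow> 0 < a \<Longrightarrow> 0 < b \<Longrightarrow>
      w (a + b) p q \<le> w a p r + w b q r"
    using assms(2) unfolding metric_modular_def by blast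
  have kl: "0 < k * lam" using assms by simp
  have e1: "lam1 + (k * lam + lam2) = lam" using assms(13) by (simp add: algebra_simps)
  have "w (lam1 + (k * lam + lam2)) x y \<le> w lam1 x (T x) + w (k * lam + lam2) y (T x)"
    using tri[of x y "T x" lam1 "k * lam + lam2"] x y Tx sub assms(12,11) kl by auto
  hence "w lam x y \<le> w lam1 x (T x) + w (k * lam + lam2) y (T x)"
    by (simp only: e1)
  note A = this
  have B: "w (k * lam + lam2) y (T x) \<le> w lam2 y (T y) + w (k * lam) (T x) (T y)"
  proof -
    have eq: "k * lam + lam2 = lam2 + k * lam" by simp
    have "w (lam2 + k * lam) y (T x) \<le> w lam2 y (T y) + w (k * lam) (T x) (T y)"
      using tri[of y "T x" "T y" lam2 "k * lam"] y Tx Ty sub assms(12) kl by blast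
    then show ?thesis by (simp only: eq)
  qed
  have C: "w (k * lam) (T x) (T y) \<le> ennreal k * w lam x y"
    using assms(8)[of lam x y] x y assms(9,10) by simp
  have "w lam2 y (T y) + w (k * lam) (T x) (T y) \<le> w lam2 y (T y) + ennreal k * w lam x y"
    using C by (rule add_left_mono)
  with B have "w (k * lam + lam2) y (T x) \<le> w lam2 y (T y) + ennreal k * w lam x y"
    by (rule order_trans)
  hence "w lam1 x (T x) + w (k * lam + lam2) y (T x) \<le> w lam1 x (T x) + (w lam2 y (T y) + ennreal k * w lam x y)"
    by (rule add_left_mono)
  with A have "w lam x y \<le> w lam1 x (T x) + (w lam2 y (T y) + ennreal k * w lam x y)"
    by (rule order_trans)
  hence "w lam x y \<le> (w lam1 x (T x) + w lam2 y (T y)) + ennreal k * w lam x y"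
    by (simp only: add.assoc)
  then show "w lam x y \<le> (w lam1 x (T x) + w lam2 y (T y)) / ennreal (1 - k)"
    by (rule ennreal_key[OF assms(5,6) fin])
qed

end
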